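(* Let $f : S\oplus V \to \mathbb{R}_{0,3}$ be a (left) holomorphic Cliffordian function on the whole space $S\oplus V\cong\mathbb{R}^4$, i.e. $D\Delta f = 0$ on $\mathbb{R}^4$. Assume that $f$ and all its partial derivatives (of all components) up to order two are bounded on $\mathbb{R}^4$. Then $f$ is constant.
   Context: $\mathbb{R}_{0,3}$ is the real Clifford algebra generated by $e_1,e_2,e_3$ with $e_ie_j+e_je_i=-2\delta_{ij}$; put $e_0=1$. $S\oplus V$ is the set of paravectors $x=x_0+x_1e_1+x_2e_2+x_3e_3$ ($x_i\in\mathbb{R}$), identified with $\mathbb{R}^4$. $D=\sum_{i=0}^3 e_i\,\partial/\partial x_i$ (acting on the left) and $\Delta=\sum_{i=0}^3\partial^2/\partial x_i^2$. A function $f$ from an open subset of $S\oplus V$ to $\mathbb{R}_{0,3}$ is (left) holomorphic Cliffordian if $D\Delta f=0$ there. *)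

theory Defs
  imports "HOL-Analysis.Analysis"
begin

text \<open>Basis blades of the Clifford algebra R_{0,3}: subsets A of {1,2,3},
  standing for e_A = e_{a1} e_{a2} ... with a1 < a2 < ... (e_{} = 1).\<close>
typedef blade = "Pow {1::nat,2,3}" by auto

instance blade :: finite
proof
  have "(UNIV :: blade set) = Abs_blade ` Pow {1,2,3}"
    by (metis Rep_blade Rep_blade_inverse image_iff UNIV_eq_I)
  then show "finite (UNIV :: blade set)" by (metis finite_Pow_iff finite_imageI finite.emptyI finite_insert)
qed

type_synonym cl03 = "real ^ blade"

text \<open>Sign in e_k e_A = csign k A * e_{A symmetric-difference {k}}, for k in {1,2,3}.\<close>
definition csign :: "nat \<Rightarrow> nat set \<Rightarrow> real" where
  "csign k A = (-1) ^ card {j\<in>A. j < k} * (if k \<in> A then -1 else 1)"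

definition symd :: "nat set \<Rightarrow> nat \<Rightarrow> nat set" where
  "symd A k = (A - {k}) \<union> ({k} - A)"

text \<open>Left multiplication by e_k (e_0 = 1).\<close>
definition emul :: "nat \<Rightarrow> cl03 \<Rightarrow> cl03" where
  "emul k u = (if k = 0 then u else
     (\<chi> B. csign k (symd (Rep_blade B) k) * u $ Abs_blade (symd (Rep_blade B) k)))"

text \<open>Paravector space S+V identified with real^4; coordinate x_k is the component
  at index (of_nat k :: 4), k = 0..3.\<close>
definition pd :: "nat \<Rightarrow> (real^4 \<Rightarrow> real) \<Rightarrow> real^4 \<Rightarrow> real" where
  "pd k g x = deriv (\<lambda>t. g (x + t *\<^sub>R axis (of_nat k :: 4) 1)) 0"

fun pds :: "nat list \<Rightarrow> (real^4 \<Rightarrow> real) \<Rightarrow> real^4 \<Rightarrow> real" where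
  "pds [] g = g"
| "pds (k # ks) g = pd k (pds ks g)"

definition C3 :: "(real^4 \<Rightarrow> real) \<Rightarrow> bool" where
  "C3 g \<longleftrightarrow> (\<forall>ks. set ks \<subseteq> {0..3} \<longrightarrow>
      (length ks < 3 \<longrightarrow> (\<forall>x. pds ks g differentiable (at x))) \<and>
      (length ks \<le> 3 \<longrightarrow> continuous_on UNIV (pds ks g)))"

definition pdv :: "nat \<Rightarrow> (real^4 \<Rightarrow> cl03) \<Rightarrow> real^4 \<Rightarrow> cl03" where
  "pdv k f x = (\<chi> B. pd k (\<lambda>y. f y $ B) x)"

definition lap :: "(real^4 \<Rightarrow> cl03) \<Rightarrow> real^4 \<Rightarrow> cl03" where
  "lap f x = (\<Sum>k<4. pdv k (pdv k f) x)"

definition Dop :: "(real^4 \<Rightarrow> cl03) \<Rightarrow> real^4 \<Rightarrow> cl03" where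
  "Dop f x = (\<Sum>k<4. emul k (pdv k f x))"

definition holo_cliff :: "(real^4 \<Rightarrow> cl03) \<Rightarrow> bool" where
  "holo_cliff f \<longleftrightarrow> (\<forall>B. C3 (\<lambda>x. f x $ B)) \<and> (\<forall>x. Dop (lap f) x = 0)"

end

theory Submission
  imports Defs
begin

definition tw :: "(real \<Rightarrow> real) \<Rightarrow> real \<Rightarrow> bool" where
  "tw g d \<longleftrightarrow> (\<exists>e>0. \<exists>g'. (\<forall>t. \<bar>t\<bar> < e \<longrightarrow> (g has_real_derivative g' t) (at t))
        \<and> (g' has_real_derivative d) (at 0))"

lemma tw_diff:
  assumes "tw g d1" "tw h d2" shows "tw (\<lambda>t. g t - h t) (d1 - d2)"
proof -
  obtain e1 g' where e1: "e1 > 0" "\<forall>t. \<bar>t\<bar> < e1 \<longrightarrow> (g has_real_derivative g' t) (at t)"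
    "(g' has_real_derivative d1) (at 0)" using assms(1) unfolding tw_def by blast
  obtain e2 h' where e2: "e2 > 0" "\<forall>t. \<bar>t\<bar> < e2 \<longrightarrow> (h has_real_derivative h' t) (at t)"
    "(h' has_real_derivative d2) (at 0)" using assms(2) unfolding tw_def by blast
  show ?thesis unfolding tw_def
    apply (rule exI[of _ "min e1 e2"], simp add: e1 e2)
    apply (rule exI[of _ "\<lambda>t. g' t - h' t"])
    using e1 e2 by (auto intro!: derivative_eq_intros)
qed

lemma tw_neg:
  assumes "tw g d" shows "tw (\<lambda>t. - g t) (- d)"
proof -
  obtain e1 g' where e1: "e1 > 0" "\<forall>t. \<bar>t\<bar> < e1 \<longrightarrow> (g has_real_derivative g' t) (at t)"
    "(g' has_real_derivative d) (at 0)" using assms(1) unfolding tw_def by blast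
  show ?thesis unfolding tw_def
    apply (rule exI[of _ e1], simp add: e1)
    apply (rule exI[of _ "\<lambda>t. - g' t"])
    using e1 by (auto intro!: derivative_eq_intros)
qed

lemma tw_refl:
  assumes "tw g d" shows "tw (\<lambda>t. g (- t)) d"
proof -
  obtain e1 g' where e1: "e1 > 0" "\<forall>t. \<bar>t\<bar> < e1 \<longrightarrow> (g has_real_derivative g' t) (at t)"
    "(g' has_real_derivative d) (at 0)" using assms(1) unfolding tw_def by blast
  have mn: "((\<lambda>t::real. - t) has_real_derivative -1) (at x)" for x
    by (auto intro!: derivative_eq_intros)
  have h0: "((\<lambda>t. g' (- t)) has_real_derivative (d * -1)) (at 0)"
  proof -
    have "DERIV g' (- 0) :> d" using e1(3) by simp
    from DERIV_chain'[OF mn[of 0] this] show ?thesis .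
  qed
  have A: "((\<lambda>t. - g' (- t)) has_real_derivative d) (at 0)"
    using DERIV_minus[OF h0] by simp
  have B:  "((\<lambda>t. g (- t)) has_real_derivative - g' (- t)) (at t)" if "\<bar>t\<bar> < e1" for t
  proof -
    have "(g has_real_derivative g' (- t)) (at (- t))" using e1(2) that by (metis abs_minus)
    from DERIV_chain'[OF mn[of t] this] show ?thesis by simp
  qed
  show ?thesis unfolding tw_def
    apply (rule exI[of _ e1], simp add: e1(1))
    apply (rule exI[of _ "\<lambda>t. - g' (- t)"])
    using A B by simp
qed

lemma tw_quad: "tw (\<lambda>t. a + b * t + c * t^2) (2 * c)"
  unfolding tw_def
  apply (rule exI[of _ 1], simp)
  apply (rule exI[of _ "\<lambda>t. b + 2 * c * t"])
  by (auto intro!: derivative_eq_intros)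

lemma tw_max:
  assumes "tw g d" "e > 0" "\<forall>t. \<bar>t\<bar> < e \<longrightarrow> g t \<le> g 0" shows "d \<le> 0"
proof (rule ccontr)
  assume "\<not> d \<le> 0" hence dp: "d > 0" by simp
  obtain e1 g' where e1: "e1 > 0" "\<forall>t. \<bar>t\<bar> < e1 \<longrightarrow> (g has_real_derivative g' t) (at t)"
    "(g' has_real_derivative d) (at 0)" using assms(1) unfolding tw_def by blast
  have g0: "g' 0 = 0"
  proof (rule DERIV_local_max[of g "g' 0" 0 "min e e1"])
    show "(g has_real_derivative g' 0) (at 0)" using e1 by simp
    show "0 < min e e1" using e1 assms by simp
    show "\<forall>y. \<bar>0 - y\<bar> < min e e1 \<longrightarrow> g y \<le> g 0" using assms by auto
  qed
  obtain d2 where d2: "d2 > 0" "\<forall>h>0. h < d2 \<longrightarrow> g' 0 < g' (0 + h)"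
    using DERIV_pos_inc_right[OF e1(3) dp] by blast
  define t where "t = min (min e e1) d2 / 2"
  have t: "t > 0" "t < e" "t < e1" "t < d2" using d2 e1 assms by (auto simp: t_def)
  obtain z where z: "0 < z" "z < t" "g t - g 0 = (t - 0) * g' z"
  proof -
    have "\<forall>x. 0 \<le> x \<and> x \<le> t \<longrightarrow> DERIV g x :> g' x"
      using t e1(2) by auto
    then show ?thesis using MVT2[of 0 t g g'] t(1) that by blast
  qed
  have "g' z > 0" using d2(2) z t g0 by (metis add_0 order.strict_trans)
  hence "g t > g 0" using z t by (smt (verit) mult_pos_pos)
  moreover have "g t \<le> g 0" using assms(3) t by auto
  ultimately show False by simp
qed

lemma tw_scale:
  assumes "tw g d" shows "tw (\<lambda>t. c * g t) (c * d)"
proof -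
  obtain e1 g' where e1: "e1 > 0" "\<forall>t. \<bar>t\<bar> < e1 \<longrightarrow> (g has_real_derivative g' t) (at t)"
    "(g' has_real_derivative d) (at 0)" using assms(1) unfolding tw_def by blast
  show ?thesis unfolding tw_def
    apply (rule exI[of _ e1], simp add: e1)
    apply (rule exI[of _ "\<lambda>t. c * g' t"])
    using e1 by (auto intro!: derivative_eq_intros)
qed

lemma axis_comp: "(x + t *\<^sub>R axis i (1::real)) $ j = x$j + (if j = i then t else 0)"
  by (simp add: axis_def)

lemma norm_line: "(norm (y + t *\<^sub>R axis i (1::real)))^2 = (norm y)^2 + 2*t*(y$i) + t^2"
  unfolding power2_norm_eq_inner
  by (simp add: inner_add_left inner_add_right inner_axis inner_axis' algebra_simps power2_eq_square)

definition rfl :: "4 \<Rightarrow> real \<Rightarrow> real^4 \<Rightarrow> real^4" where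
  "rfl k a x = x + (2 * (a - x$k)) *\<^sub>R axis k 1"

lemma rfl_comp: "rfl k a x $ j = (if j = k then 2*a - x$k else x$j)"
  by (simp add: rfl_def axis_def)

lemma rfl_line_ne: "i \<noteq> k \<Longrightarrow> rfl k a (x + t *\<^sub>R axis i 1) = rfl k a x + t *\<^sub>R axis i 1"
  by (simp add: vec_eq_iff rfl_comp axis_comp axis_def)

lemma rfl_line_eq: "rfl k a (x + t *\<^sub>R axis k 1) = rfl k a x + (-t) *\<^sub>R axis k 1"
  by (simp add: vec_eq_iff rfl_comp axis_comp axis_def)

lemma rfl_rfl: "rfl k a (rfl k a x) = x"
  by (simp add: vec_eq_iff rfl_comp)

lemma rfl_fix: "x$k = a \<Longrightarrow> rfl k a x = x"
  by (simp add: vec_eq_iff rfl_comp)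

lemma cont_rfl: "continuous_on S (rfl k a)"
  unfolding rfl_def by (intro continuous_intros)


lemma core:
  fixes u :: "real^4 \<Rightarrow> real" and k :: 4
  assumes cont: "continuous_on UNIV u"
    and bnd: "\<forall>x. \<bar>u x\<bar> \<le> M0"
    and harm: "\<forall>x. \<exists>d. (\<forall>i. tw (\<lambda>t. u (x + t *\<^sub>R axis i 1)) (d i)) \<and> sum d UNIV = 0"
    and sg: "\<sigma> = 1 \<or> \<sigma> = -1"
    and H: "H > 0" and pa: "a \<le> p$k" "p$k \<le> a + H"
  shows "\<sigma> * (u p - u (rfl k a p)) \<le> 2*(2*M0+1)*(p$k - a)/H"
proof -
  define M where "M = 2*M0+1"
  have M0: "M0 \<ge> 0" using bnd abs_ge_zero order_trans by blast
  have Mp: "M > 0" using M0 by (simp add: M_def)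
  define A where "A = 2*M/H"
  define B where "B = M/(5*H^2)"
  have Bp: "B > 0" using Mp H by (simp add: B_def)
  have Ap: "A > 0" using Mp H by (simp add: A_def)
  define w where "w x = A*(x$k - a) + B*(norm (x - p))^2 - 5*B*(x$k - a)^2" for x
  define \<phi> where "\<phi> x = \<sigma>*(u x - u (rfl k a x)) - w x" for x
  define lo where "lo = (\<chi> i. if i = k then a else p$i - 4*H)"
  define hi where "hi = (\<chi> i. if i = k then a + H else p$i + 4*H)"
  define K where "K = cbox lo hi"
  have memK: "x \<in> K \<longleftrightarrow> (\<forall>i. (if i = k then a else p$i - 4*H) \<le> x$i \<and>
       x$i \<le> (if i = k then a+H else p$i + 4*H))" for x
    unfolding K_def mem_box_cart lo_def hi_def by simp
  have pK: "p \<in> K" using pa H by (simp add: memK)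
  have cu: "continuous_on K u" using cont continuous_on_subset by blast
  have cur: "continuous_on K (\<lambda>x. u (rfl k a x))"
    by (rule continuous_on_compose2[OF cont cont_rfl]) auto
  have contphi: "continuous_on K \<phi>"
    unfolding \<phi>_def w_def by (intro continuous_intros cu cur)
  obtain q where qK: "q \<in> K" and qmax: "\<forall>y\<in>K. \<phi> y \<le> \<phi> q"
    using continuous_attains_sup[OF compact_cbox[of lo hi, folded K_def] _ contphi] pK by auto
  have ubd: "\<sigma>*(u x - u (rfl k a x)) \<le> M" for x
  proof -
    have "\<bar>u x\<bar> \<le> M0" "\<bar>u (rfl k a x)\<bar> \<le> M0" using bnd by auto
    then show ?thesis using sg unfolding M_def by auto
  qed
  have qk: "a \<le> q$k" "q$k \<le> a + H" using qK by (auto simp: memK dest: spec[of _ k])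
  have qi: "\<bar>q$i - p$i\<bar> \<le> 4*H" if "i \<noteq> k" for i
    using qK that by (auto simp: memK dest!: spec[of _ i])
  have phq: "\<phi> q \<le> 0"
  proof (cases "q$k = a \<or> q$k = a + H \<or> (\<exists>i. i \<noteq> k \<and> \<bar>q$i - p$i\<bar> = 4*H)")
    case True
    then show ?thesis
    proof (elim disjE exE conjE)
      assume h: "q$k = a"
      then have "rfl k a q = q" by (rule rfl_fix)
      moreover have "w q \<ge> 0" using h Bp unfolding w_def by simp
      ultimately show ?thesis unfolding \<phi>_def by simp
    next
      assume h: "q$k = a + H"
      have "w q \<ge> A*H - 5*B*H^2" unfolding w_def using h Bp by simp
      also have "A*H - 5*B*H^2 = M" using H unfolding A_def B_def by (simp add: field_simps power2_eq_square)
      finally show ?thesis using ubd[of q] unfolding \<phi>_def by simp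
    next
      fix i assume i: "i \<noteq> k" "\<bar>q$i - p$i\<bar> = 4*H"
      have c1: "\<bar>(q-p)$i\<bar> \<le> norm (q - p)" by (rule component_le_norm_cart)
      have "\<bar>(q-p)$i\<bar>^2 \<le> (norm (q - p))^2" by (rule power_mono[OF c1 abs_ge_zero])
      then have n16: "16*H^2 \<le> (norm (q-p))^2" using i(2) by (simp add: power2_eq_square)
      have hk: "(q$k - a)^2 \<le> H^2" using qk by (intro power_mono) auto
      have "B*(16*H^2) \<le> B*(norm (q-p))^2" using n16 Bp by simp
      moreover have "5*B*(q$k - a)^2 \<le> 5*B*H^2" using hk Bp by simp
      moreover have "A*(q$k - a) \<ge> 0" using Ap qk by simp
      ultimately have "w q \<ge> 11*B*H^2" unfolding w_def by linarith
      moreover have "11*B*H^2 \<ge> M" using H Mp unfolding B_def by (simp add: field_simps)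
      ultimately show ?thesis using ubd[of q] unfolding \<phi>_def by simp
    qed
  next
    case False
    then have qk': "a < q$k" "q$k < a + H" using qk by auto
    have qi': "\<bar>q$i - p$i\<bar> < 4*H" if "i \<noteq> k" for i using qi[OF that] False that by force
    have int: "\<exists>e>0. \<forall>t. \<bar>t\<bar> < e \<longrightarrow> q + t *\<^sub>R axis i 1 \<in> K" for i
    proof (cases "i = k")
      case True
      show ?thesis
        apply (rule exI[of _ "min (q$k - a) (a + H - q$k)"])
        using qk' True by (auto simp: memK axis_comp axis_def abs_le_iff) (use qi in \<open>force simp: abs_le_iff\<close>)+
    next
      case False
      show ?thesis
        apply (rule exI[of _ "4*H - \<bar>q$i - p$i\<bar>"])
        using qk False qi'[OF False] by (auto simp: memK axis_comp axis_def abs_le_iff) (use qi in \<open>force simp: abs_le_iff\<close>)+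
    qed
    obtain du where du: "\<forall>i. tw (\<lambda>t. u (q + t *\<^sub>R axis i 1)) (du i)" "sum du UNIV = 0"
      using harm by blast
    obtain dr where dr: "\<forall>i. tw (\<lambda>t. u (rfl k a q + t *\<^sub>R axis i 1)) (dr i)" "sum dr UNIV = 0"
      using harm by blast
    define wc where "wc i = 2*B - (if i = k then 10*B else 0)" for i
    have twphi: "tw (\<lambda>t. \<phi> (q + t *\<^sub>R axis i 1)) (\<sigma>*(du i - dr i) - wc i)" for i
    proof -
      have t1: "tw (\<lambda>t. u (rfl k a (q + t *\<^sub>R axis i 1))) (dr i)"
      proof (cases "i = k")
        case True
        then show ?thesis using tw_refl[OF dr(1)[rule_format, of k]] by (simp add: rfl_line_eq)
      next
        case False
        then show ?thesis using dr(1) by (simp add: rfl_line_ne)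
      qed
      define bb where "bb = A*(if i = k then 1 else 0) + 2*B*(q-p)$i
          - 10*B*(q$k - a)*(if i=k then 1 else 0)"
      define cc where "cc = B - (if i = k then 5*B else 0)"
      have weq: "(\<lambda>t. w (q + t *\<^sub>R axis i 1)) = (\<lambda>t. w q + bb * t + cc * t^2)"
      proof
        fix t
        have "q + t *\<^sub>R axis i 1 - p = (q - p) + t *\<^sub>R axis i 1" by simp
        then have n: "(norm (q + t *\<^sub>R axis i 1 - p))^2 = (norm (q-p))^2 + 2*t*((q-p)$i) + t^2"
          using norm_line by metis
        show "w (q + t *\<^sub>R axis i 1) = w q + bb * t + cc * t^2"
          unfolding w_def n bb_def cc_def
          by (cases "i = k") (simp_all add: axis_comp axis_def algebra_simps power2_eq_square)
      qed
      have "wc i = 2 * cc" by (simp add: wc_def cc_def)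
      then have t2: "tw (\<lambda>t. w (q + t *\<^sub>R axis i 1)) (wc i)"
        unfolding weq using tw_quad by simp
      have t3: "tw (\<lambda>t. \<sigma> * (u (q + t *\<^sub>R axis i 1) - u (rfl k a (q + t *\<^sub>R axis i 1)))) (\<sigma>*(du i - dr i))"
        by (rule tw_scale[OF tw_diff[OF du(1)[rule_format] t1]])
      show ?thesis using tw_diff[OF t3 t2] unfolding \<phi>_def .
    qed
    have dle: "\<sigma>*(du i - dr i) - wc i \<le> 0" for i
    proof -
      obtain e where e: "e > 0" "\<forall>t. \<bar>t\<bar> < e \<longrightarrow> q + t *\<^sub>R axis i 1 \<in> K" using int by blast
      show ?thesis
      proof (rule tw_max[OF twphi e(1)])
        show "\<forall>t. \<bar>t\<bar> < e \<longrightarrow> \<phi> (q + t *\<^sub>R axis i 1) \<le> \<phi> (q + 0 *\<^sub>R axis i 1)"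
          using e(2) qmax by simp
      qed
    qed
    have "sum (\<lambda>i. \<sigma>*(du i - dr i) - wc i) UNIV \<le> 0" by (rule sum_nonpos) (use dle in auto)
    moreover have "sum (\<lambda>i. \<sigma>*(du i - dr i) - wc i) UNIV = \<sigma>*(sum du UNIV - sum dr UNIV) - sum wc UNIV"
      by (simp add: sum_subtractf sum_distrib_left[symmetric])
    moreover have "sum wc UNIV = 8*B - 10*B"
      unfolding wc_def by (simp add: sum_subtractf)
    ultimately show ?thesis using du(2) dr(2) Bp by simp
  qed
  have "\<phi> p \<le> 0" using qmax pK phq by force
  moreover have "w p \<le> A*(p$k - a)" unfolding w_def using Bp by simp
  ultimately have "\<sigma> * (u p - u (rfl k a p)) \<le> A*(p$k - a)" unfolding \<phi>_def by simp
  then show ?thesis unfolding A_def M_def by simp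
qed


lemma rfl_inv:
  fixes u :: "real^4 \<Rightarrow> real" and k :: 4
  assumes cont: "continuous_on UNIV u"
    and bnd: "\<forall>x. \<bar>u x\<bar> \<le> M0"
    and harm: "\<forall>x. \<exists>d. (\<forall>i. tw (\<lambda>t. u (x + t *\<^sub>R axis i 1)) (d i)) \<and> sum d UNIV = 0"
  shows "u p = u (rfl k a p)"
proof -
  have M0: "M0 \<ge> 0" using bnd abs_ge_zero order_trans by blast
  have main: "u p = u (rfl k a p)" if pa: "a \<le> p$k" for p
  proof -
    have le: "\<sigma> * (u p - u (rfl k a p)) \<le> 0" if sg: "\<sigma> = 1 \<or> \<sigma> = -1" for \<sigma>
    proof (rule ccontr)
      assume "\<not> ?thesis"
      then have sp: "\<sigma> * (u p - u (rfl k a p)) > 0" by simp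
      define s where "s = \<sigma> * (u p - u (rfl k a p))"
      define c where "c = p$k - a"
      define M where "M = 2*M0+1"
      have c0: "c \<ge> 0" using pa by (simp add: c_def)
      have Mp: "M > 0" using M0 by (simp add: M_def)
      define H where "H = c + 2*M*c/s + 1"
      have s0: "s > 0" using sp by (simp add: s_def)
      have "2*M*c/s \<ge> 0" using s0 Mp c0 by simp
      then have H0: "H > 0" "H \<ge> c" "H > 2*M*c/s" unfolding H_def using c0 by linarith+
      have "s \<le> 2*M*c/H"
        using core[OF cont bnd harm sg H0(1) pa] H0(2) unfolding s_def c_def M_def by simp
      then have "s * H \<le> 2*M*c" using H0(1) by (simp add: field_simps)
      moreover have "s * H > 2*M*c" using H0(3) s0 by (simp add: field_simps)
      ultimately show False by simp
    qed
    from le[of 1] le[of "-1"] show ?thesis by simp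
  qed
  show ?thesis
  proof (cases "a \<le> p$k")
    case True then show ?thesis by (rule main)
  next
    case False
    have "a \<le> rfl k a p $ k" using False by (simp add: rfl_comp)
    from main[OF this] show ?thesis by (simp add: rfl_rfl)
  qed
qed

lemma liouville:
  fixes u :: "real^4 \<Rightarrow> real"
  assumes cont: "continuous_on UNIV u"
    and bnd: "\<forall>x. \<bar>u x\<bar> \<le> M0"
    and harm: "\<forall>x. \<exists>d. (\<forall>i. tw (\<lambda>t. u (x + t *\<^sub>R axis i 1)) (d i)) \<and> sum d UNIV = 0"
  shows "u x = u y"
proof -
  have tr: "u (z + s *\<^sub>R axis k 1) = u z" for z s k
  proof -
    have "rfl k (z$k + s/2) z = z + s *\<^sub>R axis k 1" by (simp add: rfl_def)
    then show ?thesis using rfl_inv[OF cont bnd harm, of z k "z$k + s/2"] by simp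
  qed
  have fin: "finite S \<Longrightarrow> u (z + (\<Sum>i\<in>S. c i *\<^sub>R axis i 1)) = u z" for S z c
  proof (induction S rule: finite_induct)
    case empty then show ?case by simp
  next
    case (insert j S)
    have "z + (\<Sum>i\<in>insert j S. c i *\<^sub>R axis i 1) = (z + (\<Sum>i\<in>S. c i *\<^sub>R axis i 1)) + c j *\<^sub>R axis j 1"
      using insert(1,2) by (simp add: algebra_simps)
    then have "u (z + (\<Sum>i\<in>insert j S. c i *\<^sub>R axis i 1)) = u (z + (\<Sum>i\<in>S. c i *\<^sub>R axis i 1))"
      using tr by presburger
    then show ?case using insert(3) by simp
  qed
  have "y = x + (\<Sum>i\<in>UNIV. (y - x)$i *\<^sub>R axis i 1)"
    using basis_expansion[of "y - x"] by (simp add: scalar_mult_eq_scaleR)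
  then show ?thesis using fin[of UNIV x "\<lambda>i. (y-x)$i"] by simp
qed

definition pdi :: "4 \<Rightarrow> (real^4 \<Rightarrow> real) \<Rightarrow> real^4 \<Rightarrow> real" where
  "pdi i g x = deriv (\<lambda>t. g (x + t *\<^sub>R axis i 1)) 0"

lemma pd_pdi: "pd k = pdi (of_nat k)"
  by (simp add: fun_eq_iff pd_def pdi_def)

lemma line_has_deriv:
  assumes "u differentiable (at (x + t *\<^sub>R axis i 1))"
  shows "((\<lambda>s. u (x + s *\<^sub>R axis i 1)) has_real_derivative pdi i u (x + t *\<^sub>R axis i 1)) (at t)"
proof -
  define e where "e = axis i (1::real)"
  define y where "y = x + t *\<^sub>R e"
  obtain u' where u': "(u has_derivative u') (at y)" using assms unfolding y_def e_def differentiable_def by blast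
  have lin: "u' (h *\<^sub>R e) = h * u' e" for h
    using has_derivative_bounded_linear[OF u'] by (simp add: linear_simps)
  have gen: "((\<lambda>s. u (z + s *\<^sub>R e)) has_real_derivative u' e) (at r)" if "z + r *\<^sub>R e = y" for z r
  proof -
    have d1: "((\<lambda>s. z + s *\<^sub>R e) has_derivative (\<lambda>h. h *\<^sub>R e)) (at r)"
      by (auto intro!: derivative_eq_intros)
    have u'': "(u has_derivative u') (at (z + r *\<^sub>R e))" using u' that by simp
    have "((\<lambda>s. u (z + s *\<^sub>R e)) has_derivative (\<lambda>h. u' (h *\<^sub>R e))) (at r)"
      using has_derivative_compose[OF d1 u''] by (simp add: o_def)
    then show ?thesis unfolding has_field_derivative_def lin by (simp add: mult_commute_abs)
  qed
  have "pdi i u y = u' e"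
    unfolding pdi_def e_def[symmetric] using gen[of y 0] by (simp add: DERIV_imp_deriv)
  then show ?thesis using gen[of x t] unfolding y_def e_def by simp
qed

lemma line_has_deriv0:
  assumes "u differentiable (at x)"
  shows "((\<lambda>s. u (x + s *\<^sub>R axis i 1)) has_real_derivative pdi i u x) (at 0)"
  using line_has_deriv[of u x 0 i] assms by simp

lemma tw_pdi:
  assumes "\<forall>y. u differentiable (at y)" "pdi i u differentiable (at x)"
  shows "tw (\<lambda>t. u (x + t *\<^sub>R axis i 1)) (pdi i (pdi i u) x)"
proof -
  have A: "\<forall>t. \<bar>t\<bar> < 1 \<longrightarrow> ((\<lambda>t. u (x + t *\<^sub>R axis i 1)) has_real_derivative pdi i u (x + t *\<^sub>R axis i 1)) (at t)"
  proof (intro allI impI)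
    fix t :: real
    show "((\<lambda>t. u (x + t *\<^sub>R axis i 1)) has_real_derivative pdi i u (x + t *\<^sub>R axis i 1)) (at t)"
      by (rule line_has_deriv) (use assms(1) in blast)
  qed
  have B: "((\<lambda>t. pdi i u (x + t *\<^sub>R axis i 1)) has_real_derivative pdi i (pdi i u) x) (at 0)"
    by (rule line_has_deriv0[OF assms(2)])
  show ?thesis unfolding tw_def
    apply (rule exI[of _ 1], simp)
    apply (rule exI[of _ "\<lambda>t. pdi i u (x + t *\<^sub>R axis i 1)"])
    using A B by simp
qed

lemma pdi_sum:
  assumes "finite J" "\<forall>j\<in>J. g j differentiable (at x)"
  shows "pdi i (\<lambda>y. \<Sum>j\<in>J. c j * g j y) x = (\<Sum>j\<in>J. c j * pdi i (g j) x)"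
proof -
  have "((\<lambda>s. \<Sum>j\<in>J. c j * g j (x + s *\<^sub>R axis i 1)) has_real_derivative (\<Sum>j\<in>J. c j * pdi i (g j) x)) (at 0)"
    using assms by (auto intro!: DERIV_sum DERIV_cmult line_has_deriv0)
  then show ?thesis unfolding pdi_def by (rule DERIV_imp_deriv)
qed

lemma pdi_const: "pdi i (\<lambda>y. c) x = 0"
  unfolding pdi_def by simp

lemma mvt_line:
  assumes "\<forall>y. u differentiable (at y)" "s > 0"
  shows "\<exists>\<xi>. 0 < \<xi> \<and> \<xi> < s \<and> u (x + s *\<^sub>R axis i 1) - u x = s * pdi i u (x + \<xi> *\<^sub>R axis i 1)"
proof -
  have "DERIV (\<lambda>r. u (x + r *\<^sub>R axis i 1)) r :> pdi i u (x + r *\<^sub>R axis i 1)" if "0 \<le> r" "r \<le> s" for r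
    by (rule line_has_deriv) (use assms(1) in blast)
  from MVT2[OF assms(2) this] show ?thesis by simp
qed

lemma mvt_line2:
  assumes "\<forall>y. u differentiable (at y)" "s > 0"
  shows "\<exists>\<xi>. 0 < \<xi> \<and> \<xi> < s \<and> (u (x1 + s *\<^sub>R axis i 1) - u (x2 + s *\<^sub>R axis i 1)) - (u x1 - u x2)
      = s * (pdi i u (x1 + \<xi> *\<^sub>R axis i 1) - pdi i u (x2 + \<xi> *\<^sub>R axis i 1))"
proof -
  have "DERIV (\<lambda>r. u (x1 + r *\<^sub>R axis i 1) - u (x2 + r *\<^sub>R axis i 1)) r
      :> pdi i u (x1 + r *\<^sub>R axis i 1) - pdi i u (x2 + r *\<^sub>R axis i 1)" if "0 \<le> r" "r \<le> s" for r
    by (intro DERIV_diff line_has_deriv) (use assms(1) in blast)+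
  from MVT2[OF assms(2) this] show ?thesis by simp
qed

lemma small_norm:
  assumes "0 < a" "a < h" "0 < b" "b < h"
  shows "dist (x + a *\<^sub>R axis i (1::real) + b *\<^sub>R axis j 1) x < 2*h"
proof -
  have "dist (x + a *\<^sub>R axis i (1::real) + b *\<^sub>R axis j 1) x = norm (a *\<^sub>R axis i (1::real) + b *\<^sub>R axis j 1)"
    by (simp add: dist_norm)
  also have "\<dots> \<le> norm (a *\<^sub>R axis i (1::real)) + norm (b *\<^sub>R axis j (1::real))" by (rule norm_triangle_ineq)
  also have "\<dots> = a + b" using assms by simp
  finally show ?thesis using assms by simp
qed

lemma schwarz:
  fixes u :: "real^4 \<Rightarrow> real"
  assumes du: "\<forall>y. u differentiable (at y)"
    and di: "\<forall>y. pdi i u differentiable (at y)" and dj: "\<forall>y. pdi j u differentiable (at y)"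
    and c1: "continuous_on UNIV (pdi j (pdi i u))" and c2: "continuous_on UNIV (pdi i (pdi j u))"
  shows "pdi j (pdi i u) x = pdi i (pdi j u) x"
proof (rule ccontr)
  assume ne: "\<not> ?thesis"
  define ei where "ei = axis i (1::real)"
  define ej where "ej = axis j (1::real)"
  define D1 where "D1 = pdi j (pdi i u) x"
  define D2 where "D2 = pdi i (pdi j u) x"
  define \<epsilon> where "\<epsilon> = \<bar>D1 - D2\<bar> / 2"
  have ep: "\<epsilon> > 0" using ne by (simp add: \<epsilon>_def D1_def D2_def)
  obtain d1 where d1: "d1 > 0" "\<forall>y. dist y x < d1 \<longrightarrow> dist (pdi j (pdi i u) y) D1 < \<epsilon>"
    using c1 ep unfolding continuous_on_iff D1_def by blast
  obtain d2 where d2: "d2 > 0" "\<forall>y. dist y x < d2 \<longrightarrow> dist (pdi i (pdi j u) y) D2 < \<epsilon>"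
    using c2 ep unfolding continuous_on_iff D2_def by blast
  define h where "h = min d1 d2 / 4"
  have h0: "h > 0" "2*h < d1" "2*h < d2" using d1 d2 by (auto simp: h_def)
  define Q where "Q = u (x + h *\<^sub>R ei + h *\<^sub>R ej) - u (x + h *\<^sub>R ei) - u (x + h *\<^sub>R ej) + u x"
  obtain \<xi> where xi: "0 < \<xi>" "\<xi> < h"
    "(u ((x + h *\<^sub>R ej) + h *\<^sub>R ei) - u (x + h *\<^sub>R ei)) - (u (x + h *\<^sub>R ej) - u x)
      = h * (pdi i u ((x + h *\<^sub>R ej) + \<xi> *\<^sub>R ei) - pdi i u (x + \<xi> *\<^sub>R ei))"
    using mvt_line2[OF du h0(1), of "x + h *\<^sub>R ej" i x] unfolding ei_def by blast
  obtain \<eta> where eta: "0 < \<eta>" "\<eta> < h"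
    "pdi i u ((x + \<xi> *\<^sub>R ei) + h *\<^sub>R ej) - pdi i u (x + \<xi> *\<^sub>R ei) = h * pdi j (pdi i u) (x + \<xi> *\<^sub>R ei + \<eta> *\<^sub>R ej)"
    using mvt_line[OF di h0(1), of "x + \<xi> *\<^sub>R ei" j] unfolding ej_def by blast
  have Q1: "Q = h * h * pdi j (pdi i u) (x + \<xi> *\<^sub>R ei + \<eta> *\<^sub>R ej)"
  proof -
    have "x + h *\<^sub>R ej + h *\<^sub>R ei = x + h *\<^sub>R ei + h *\<^sub>R ej" "x + h *\<^sub>R ej + \<xi> *\<^sub>R ei = x + \<xi> *\<^sub>R ei + h *\<^sub>R ej"
      by (simp_all add: algebra_simps)
    then show ?thesis using xi(3) eta(3) unfolding Q_def by (simp add: algebra_simps)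
  qed
  obtain \<xi>' where xi': "0 < \<xi>'" "\<xi>' < h"
    "(u ((x + h *\<^sub>R ei) + h *\<^sub>R ej) - u (x + h *\<^sub>R ej)) - (u (x + h *\<^sub>R ei) - u x)
      = h * (pdi j u ((x + h *\<^sub>R ei) + \<xi>' *\<^sub>R ej) - pdi j u (x + \<xi>' *\<^sub>R ej))"
    using mvt_line2[OF du h0(1), of "x + h *\<^sub>R ei" j x] unfolding ej_def by blast
  obtain \<eta>' where eta': "0 < \<eta>'" "\<eta>' < h"
    "pdi j u ((x + \<xi>' *\<^sub>R ej) + h *\<^sub>R ei) - pdi j u (x + \<xi>' *\<^sub>R ej) = h * pdi i (pdi j u) (x + \<xi>' *\<^sub>R ej + \<eta>' *\<^sub>R ei)"
    using mvt_line[OF dj h0(1), of "x + \<xi>' *\<^sub>R ej" i] unfolding ei_def by blast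
  have Q2: "Q = h * h * pdi i (pdi j u) (x + \<xi>' *\<^sub>R ej + \<eta>' *\<^sub>R ei)"
  proof -
    have "x + h *\<^sub>R ei + \<xi>' *\<^sub>R ej = x + \<xi>' *\<^sub>R ej + h *\<^sub>R ei"
      by (simp_all add: algebra_simps)
    then show ?thesis using xi'(3) eta'(3) unfolding Q_def by (simp add: algebra_simps)
  qed
  have eq: "pdi j (pdi i u) (x + \<xi> *\<^sub>R ei + \<eta> *\<^sub>R ej) = pdi i (pdi j u) (x + \<xi>' *\<^sub>R ej + \<eta>' *\<^sub>R ei)"
    using Q1 Q2 h0(1) by simp
  have "dist (x + \<xi> *\<^sub>R ei + \<eta> *\<^sub>R ej) x < d1"
    using small_norm[OF xi(1,2) eta(1,2), of x i j] h0 unfolding ei_def ej_def by simp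
  then have a1: "\<bar>pdi j (pdi i u) (x + \<xi> *\<^sub>R ei + \<eta> *\<^sub>R ej) - D1\<bar> < \<epsilon>" using d1(2) by (simp add: dist_real_def)
  have "dist (x + \<xi>' *\<^sub>R ej + \<eta>' *\<^sub>R ei) x < d2"
    using small_norm[OF xi'(1,2) eta'(1,2), of x j i] h0 unfolding ei_def ej_def by simp
  then have a2: "\<bar>pdi i (pdi j u) (x + \<xi>' *\<^sub>R ej + \<eta>' *\<^sub>R ei) - D2\<bar> < \<epsilon>" using d2(2) by (simp add: dist_real_def)
  from a1 a2 eq have "\<bar>D1 - D2\<bar> < 2 * \<epsilon>" by linarith
  then show False unfolding \<epsilon>_def by simp
qed

definition sbs :: "nat \<Rightarrow> nat set \<Rightarrow> nat set" where
  "sbs k A = (if k = 0 then A else symd A k)"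
definition cfs :: "nat \<Rightarrow> nat set \<Rightarrow> real" where
  "cfs k A = (if k = 0 then 1 else csign k (symd A k))"
definition eps :: "nat \<Rightarrow> real" where
  "eps k = (if k = 0 then 1 else -1)"

lemma coll_int: "{j\<in>A. j < k} = A \<inter> {..<k}" by auto

lemma pow3a: "A \<subseteq> {1,2,3::nat} \<Longrightarrow> A = (if 1\<in>A then {1} else {}) \<union> (if 2\<in>A then {2} else {}) \<union> (if 3 \<in> A then {3} else {})"
  by (rule set_eqI) auto

lemma pow3: assumes "A \<subseteq> {1,2,3::nat}" shows "A = {} \<or> A = {1} \<or> A = {2} \<or> A = {3} \<or> A = {1,2} \<or> A = {1,3} \<or> A = {2,3} \<or> A = {1,2,3}"
proof -
  define b1 where "b1 = (1 \<in> A)"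
  define b2 where "b2 = (2 \<in> A)"
  define b3 where "b3 = (3 \<in> A)"
  have e: "A = (if b1 then {1} else {}) \<union> (if b2 then {2} else {}) \<union> (if b3 then {3} else {})"
    using pow3a[OF assms] unfolding b1_def b2_def b3_def .
  show ?thesis unfolding e by (cases b1; cases b2; cases b3) (simp_all add: insert_commute)
qed

lemma k4: "k < (4::nat) \<Longrightarrow> k = 0 \<or> k = 1 \<or> k = 2 \<or> k = 3" by auto

lemma signs:
  assumes A: "A \<subseteq> {1,2,3}" and i: "i < 4" and k: "k < 4"
  shows "(i = k \<longrightarrow> eps i * cfs i A * cfs i (sbs i A) = 1 \<and> sbs i (sbs i A) = A) \<and>
         (i \<noteq> k \<longrightarrow> sbs k (sbs i A) = sbs i (sbs k A) \<and>
             eps i * cfs i A * cfs k (sbs i A) = - (eps k * cfs k A * cfs i (sbs k A)))"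
  using pow3[OF A] k4[OF i] k4[OF k]
  apply (elim disjE)
  apply (simp_all add: eps_def cfs_def sbs_def symd_def insert_Diff_if insert_commute)
  apply (simp_all only: csign_def coll_int)
  by (simp_all add: Int_insert_left)

lemma four0: "(4::4) = 0" by simp
lemma sumU4: "sum F (UNIV::4 set) = F 0 + F 1 + F 2 + (F 3 :: real)"
  unfolding sum_4 four0 by (simp add: ac_simps)
lemma sum4n: "(\<Sum>k<(4::nat). F k) = F 0 + F 1 + F 2 + (F 3 :: real)"
  by (simp add: eval_nat_numeral)
lemma conv4: "(\<Sum>k<4. F (of_nat k :: 4)) = (sum F UNIV :: real)"
  unfolding sumU4 sum4n by simp
lemma ex4: "\<exists>k. k < 4 \<and> (i::4) = of_nat k"
proof -
  have "i = 1 \<or> i = 2 \<or> i = 3 \<or> i = 4" by (rule exhaust_4)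
  then show ?thesis
    apply (elim disjE)
    apply (rule exI[of _ 1], simp)
    apply (rule exI[of _ 2], simp)
    apply (rule exI[of _ 3], simp)
    apply (rule exI[of _ 0], simp)
    done
qed

definition bl :: "blade \<Rightarrow> nat \<Rightarrow> blade" where
  "bl B k = Abs_blade (sbs k (Rep_blade B))"
definition cf :: "blade \<Rightarrow> nat \<Rightarrow> real" where
  "cf B k = cfs k (Rep_blade B)"

lemma sbs_sub: "A \<subseteq> {1,2,3} \<Longrightarrow> k < 4 \<Longrightarrow> sbs k A \<subseteq> {1,2,3}"
  using k4[of k] by (auto simp: sbs_def symd_def)

lemma Rep_bl: "k < 4 \<Longrightarrow> Rep_blade (bl B k) = sbs k (Rep_blade B)"
  unfolding bl_def using Rep_blade[of B] sbs_sub[of "Rep_blade B" k]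
  by (simp add: Abs_blade_inverse)

lemma emul_comp: "k < 4 \<Longrightarrow> emul k u $ B = cf B k * u $ bl B k"
  by (cases "k = 0") (simp_all add: emul_def cf_def bl_def cfs_def sbs_def Rep_blade_inverse)

lemma Dop_comp: "Dop g x $ B = (\<Sum>k<4. cf B k * pdi (of_nat k) (\<lambda>y. g y $ bl B k) x)"
  unfolding Dop_def sum_component
  by (rule sum.cong) (simp_all add: emul_comp pdv_def pd_pdi)

lemma lap_comp: "(\<lambda>y. lap g y $ B) = (\<lambda>y. \<Sum>i\<in>UNIV. pdi i (pdi i (\<lambda>z. g z $ B)) y)"
proof
  fix y
  have "(\<lambda>z. pdv k g z $ B) = pd k (\<lambda>z. g z $ B)" for k by (simp add: pdv_def fun_eq_iff)
  then have "lap g y $ B = (\<Sum>k<4. pdi (of_nat k) (pdi (of_nat k) (\<lambda>z. g z $ B)) y)"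
    unfolding lap_def sum_component by (simp add: pdv_def pd_pdi)
  then show "lap g y $ B = (\<Sum>i\<in>UNIV. pdi i (pdi i (\<lambda>z. g z $ B)) y)"
    using conv4[of "\<lambda>i. pdi i (pdi i (\<lambda>z. g z $ B)) y"] by simp
qed

lemma C3_D:
  assumes "C3 g" "set ks \<subseteq> {0..3}" "length ks < 3" shows "pds ks g differentiable (at x)"
  using assms unfolding C3_def by blast

lemma C3_C:
  assumes "C3 g" "set ks \<subseteq> {0..3}" "length ks \<le> 3" shows "continuous_on UNIV (pds ks g)"
  using assms unfolding C3_def by blast


lemma of4: obtains a where "a < 4" "i = (of_nat a :: 4)"
  using ex4[of i] by blast

lemma C3_d0: "C3 g \<Longrightarrow> g differentiable (at y)"
  using C3_D[of g "[]" y] by simp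

lemma C3_d1: "C3 g \<Longrightarrow> pdi i g differentiable (at y)"
proof -
  assume g: "C3 g"
  obtain a where a: "a < 4" "i = of_nat a" by (rule of4)
  have "set [a] \<subseteq> {0..3}" using a(1) by auto
  from C3_D[OF g this] show ?thesis using a(2) by (simp add: pd_pdi)
qed

lemma C3_d2: "C3 g \<Longrightarrow> pdi i (pdi j g) differentiable (at y)"
proof -
  assume g: "C3 g"
  obtain a where a: "a < 4" "i = of_nat a" by (rule of4)
  obtain b where b: "b < 4" "j = of_nat b" by (rule of4)
  have "set [a,b] \<subseteq> {0..3}" using a(1) b(1) by auto
  from C3_D[OF g this] show ?thesis using a(2) b(2) by (simp add: pd_pdi)
qed

lemma C3_c2: "C3 g \<Longrightarrow> continuous_on UNIV (pdi i (pdi j g))"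
proof -
  assume g: "C3 g"
  obtain a where a: "a < 4" "i = of_nat a" by (rule of4)
  obtain b where b: "b < 4" "j = of_nat b" by (rule of4)
  have "set [a,b] \<subseteq> {0..3}" using a(1) b(1) by auto
  from C3_C[OF g this] show ?thesis using a(2) b(2) by (simp add: pd_pdi)
qed

lemma C3_c3: "C3 g \<Longrightarrow> continuous_on UNIV (pdi i (pdi j (pdi l g)))"
proof -
  assume g: "C3 g"
  obtain a where a: "a < 4" "i = of_nat a" by (rule of4)
  obtain b where b: "b < 4" "j = of_nat b" by (rule of4)
  obtain c where c: "c < 4" "l = of_nat c" by (rule of4)
  have "set [a,b,c] \<subseteq> {0..3}" using a(1) b(1) c(1) by auto
  from C3_C[OF g this] show ?thesis using a(2) b(2) c(2) by (simp add: pd_pdi)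
qed

lemma swap3:
  assumes "C3 g"
  shows "pdi i (pdi i (pdi k g)) x = pdi k (pdi i (pdi i g)) x"
proof -
  note F = C3_d0[OF assms] C3_d1[OF assms] C3_d2[OF assms] C3_c2[OF assms] C3_c3[OF assms]
  have s1: "pdi i (pdi k g) = pdi k (pdi i g)"
  proof
    fix y show "pdi i (pdi k g) y = pdi k (pdi i g) y"
      by (rule schwarz) (simp_all add: F)
  qed
  have "pdi i (pdi k (pdi i g)) x = pdi k (pdi i (pdi i g)) x"
    by (rule schwarz) (simp_all add: F)
  then show ?thesis unfolding s1 .
qed

lemma schwarz2:
  assumes "C3 g"
  shows "pdi i (pdi k g) x = pdi k (pdi i g) x"
  by (rule schwarz) (simp_all add: C3_d0[OF assms] C3_d1[OF assms] C3_d2[OF assms] C3_c2[OF assms])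

lemma antisym_sum:
  fixes a :: "'a \<Rightarrow> 'a \<Rightarrow> real"
  assumes "finite I" "\<And>i k. i\<in>I \<Longrightarrow> k\<in>I \<Longrightarrow> i \<noteq> k \<Longrightarrow> a i k = - a k i"
  shows "(\<Sum>i\<in>I. \<Sum>k\<in>I. a i k) = (\<Sum>i\<in>I. a i i)"
proof -
  have sw: "(\<Sum>i\<in>I. \<Sum>k\<in>I. a i k) = (\<Sum>i\<in>I. \<Sum>k\<in>I. a k i)" by (rule sum.swap)
  have "(\<Sum>i\<in>I. \<Sum>k\<in>I. a i k) + (\<Sum>i\<in>I. \<Sum>k\<in>I. a k i) = (\<Sum>i\<in>I. \<Sum>k\<in>I. a i k + a k i)"
    by (simp add: sum.distrib)
  also have "\<dots> = (\<Sum>i\<in>I. \<Sum>k\<in>I. if k = i then 2 * a i i else 0)"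
  proof (rule sum.cong[OF refl], rule sum.cong[OF refl])
    fix i k assume ik: "i \<in> I" "k \<in> I"
    show "a i k + a k i = (if k = i then 2 * a i i else 0)"
    proof (cases "k = i")
      case True then show ?thesis by simp
    next
      case False
      have "a i k = - a k i" using assms(2)[of i k] \<open>i \<in> I\<close> \<open>k \<in> I\<close> False by metis
      then show ?thesis using False by simp
    qed
  qed
  also have "\<dots> = (\<Sum>i\<in>I. 2 * a i i)" using assms(1) by (simp add: sum.delta)
  finally show ?thesis using sw by (simp add: sum_distrib_left[symmetric])
qed

lemma diff_cont: "(\<And>y. u differentiable (at y)) \<Longrightarrow> continuous_on UNIV u"
  by (rule differentiable_imp_continuous_on, rule differentiable_at_imp_differentiable_on) auto

lemma bounded_abs: "bounded (range (u :: real^4 \<Rightarrow> real)) \<Longrightarrow> \<exists>M. \<forall>x. \<bar>u x\<bar> \<le> M"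
  unfolding bounded_iff by auto

theorem mainTheorem1:
  fixes f :: "real^4 \<Rightarrow> cl03"
  assumes "holo_cliff f"
    and "\<forall>B ks. set ks \<subseteq> {0..3} \<and> length ks \<le> 2 \<longrightarrow>
           bounded (range (pds ks (\<lambda>x. f x $ B)))"
  shows "\<exists>c. \<forall>x. f x = c"
proof -
  define g where "g B = (\<lambda>x. f x $ B)" for B
  have C: "C3 (g B)" for B using assms(1) unfolding holo_cliff_def g_def by simp
  have DL: "Dop (lap f) x = 0" for x using assms(1) unfolding holo_cliff_def by simp
  have bnd0: "\<exists>M. \<forall>x. \<bar>g B x\<bar> \<le> M" for B
  proof -
    have "bounded (range (pds [] (\<lambda>x. f x $ B)))" using spec[OF spec[OF assms(2), of B], of "[]"] by simp
    then show ?thesis unfolding g_def by (intro bounded_abs) simp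
  qed
  have bnd1: "\<exists>M. \<forall>x. \<bar>pdi (of_nat k) (g B) x\<bar> \<le> M" if "k < 4" for B k
  proof -
    have "set [k] \<subseteq> {0..3}" using that by auto
    then have "bounded (range (pds [k] (\<lambda>x. f x $ B)))" using spec[OF spec[OF assms(2), of B], of "[k]"] by simp
    then show ?thesis unfolding g_def by (intro bounded_abs) (simp add: pd_pdi)
  qed
  define h where "h B = (\<lambda>x. Dop f x $ B)" for B
  have hfun: "h B = (\<lambda>x. \<Sum>k<4. cf B k * pdi (of_nat k) (g (bl B k)) x)" for B
    unfolding h_def g_def by (simp add: Dop_comp)
  have dh: "h B differentiable (at y)" for B y
    unfolding hfun by (intro differentiable_sum ballI differentiable_mult differentiable_const C3_d1[OF C]) simp
  have pdhf: "pdi i (h B) = (\<lambda>y. \<Sum>k<4. cf B k * pdi i (pdi (of_nat k) (g (bl B k))) y)" for i B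
  proof
    fix y
    show "pdi i (h B) y = (\<Sum>k<4. cf B k * pdi i (pdi (of_nat k) (g (bl B k))) y)"
      unfolding hfun
      by (rule pdi_sum[where J="{..<4}" and g="\<lambda>k. pdi (of_nat k) (g (bl B k))" and c="cf B"])
         (simp_all add: C3_d1[OF C])
  qed
  have dph: "pdi i (h B) differentiable (at y)" for i B y
    unfolding pdhf by (intro differentiable_sum ballI differentiable_mult differentiable_const C3_d2[OF C]) simp
  have pph: "pdi i (pdi i (h B)) x = (\<Sum>k<4. cf B k * pdi i (pdi i (pdi (of_nat k) (g (bl B k)))) x)" for i B x
    unfolding pdhf
    by (rule pdi_sum[where J="{..<4}" and g="\<lambda>k. pdi i (pdi (of_nat k) (g (bl B k)))" and c="cf B"])
       (simp_all add: C3_d2[OF C])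
  have harm_h: "(\<Sum>i\<in>UNIV. pdi i (pdi i (h B)) x) = 0" for B x
  proof -
    have "(\<Sum>i\<in>UNIV. pdi i (pdi i (h B)) x)
        = (\<Sum>i\<in>UNIV. \<Sum>k<4. cf B k * pdi i (pdi i (pdi (of_nat k) (g (bl B k)))) x)"
      by (simp add: pph)
    also have "\<dots> = (\<Sum>k<4. \<Sum>i\<in>UNIV. cf B k * pdi i (pdi i (pdi (of_nat k) (g (bl B k)))) x)"
      by (rule sum.swap)
    also have "\<dots> = (\<Sum>k<4. cf B k * (\<Sum>i\<in>UNIV. pdi (of_nat k) (pdi i (pdi i (g (bl B k)))) x))"
    proof (rule sum.cong[OF refl])
      fix k
      have "pdi i (pdi i (pdi (of_nat k) (g (bl B k)))) x = pdi (of_nat k) (pdi i (pdi i (g (bl B k)))) x" for i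
        by (rule swap3[OF C])
      then show "(\<Sum>i\<in>UNIV. cf B k * pdi i (pdi i (pdi (of_nat k) (g (bl B k)))) x) =
         cf B k * (\<Sum>i\<in>UNIV. pdi (of_nat k) (pdi i (pdi i (g (bl B k)))) x)"
        by (simp add: sum_distrib_left)
    qed
    also have "\<dots> = (\<Sum>k<4. cf B k * pdi (of_nat k) (\<lambda>y. \<Sum>i\<in>UNIV. 1 * pdi i (pdi i (g (bl B k))) y) x)"
    proof (rule sum.cong[OF refl])
      fix k
      have "pdi (of_nat k) (\<lambda>y. \<Sum>i\<in>UNIV. 1 * pdi i (pdi i (g (bl B k))) y) x
          = (\<Sum>i\<in>UNIV. 1 * pdi (of_nat k) (pdi i (pdi i (g (bl B k)))) x)"
        by (rule pdi_sum[where J=UNIV and g="\<lambda>i. pdi i (pdi i (g (bl B k)))" and c="\<lambda>_. 1"])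
           (simp_all add: C3_d2[OF C])
      then show "cf B k * (\<Sum>i\<in>UNIV. pdi (of_nat k) (pdi i (pdi i (g (bl B k)))) x)
          = cf B k * pdi (of_nat k) (\<lambda>y. \<Sum>i\<in>UNIV. 1 * pdi i (pdi i (g (bl B k))) y) x" by simp
    qed
    also have "\<dots> = (\<Sum>k<4. cf B k * pdi (of_nat k) (\<lambda>y. lap f y $ bl B k) x)"
      by (simp add: lap_comp g_def)
    also have "\<dots> = Dop (lap f) x $ B" by (simp add: Dop_comp)
    also have "\<dots> = 0" using DL by simp
    finally show ?thesis .
  qed
  have hconst: "h B x = h B 0" for B x
  proof -
    obtain M where M: "\<forall>x. \<bar>h B x\<bar> \<le> M"
    proof -
      have "\<forall>k<4. \<exists>M. \<forall>x. \<bar>pdi (of_nat k) (g (bl B k)) x\<bar> \<le> M" using bnd1 by blast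
      then obtain Mk where Mk: "\<forall>k<4. \<forall>x. \<bar>pdi (of_nat k) (g (bl B k)) x\<bar> \<le> Mk k" by metis
      have "\<bar>h B x\<bar> \<le> (\<Sum>k<4. \<bar>cf B k\<bar> * Mk k)" for x
      proof -
        have "\<bar>h B x\<bar> \<le> (\<Sum>k<4. \<bar>cf B k * pdi (of_nat k) (g (bl B k)) x\<bar>)"
          unfolding hfun by (rule sum_abs)
        also have "\<dots> \<le> (\<Sum>k<4. \<bar>cf B k\<bar> * Mk k)"
          by (rule sum_mono) (simp add: abs_mult Mk mult_left_mono)
        finally show ?thesis .
      qed
      then show ?thesis using that by blast
    qed
    show ?thesis
    proof (rule liouville[of "h B" M])
      show "continuous_on UNIV (h B)" by (rule diff_cont) (rule dh)
      show "\<forall>x. \<bar>h B x\<bar> \<le> M" by (rule M)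
      show "\<forall>x. \<exists>d. (\<forall>i. tw (\<lambda>t. h B (x + t *\<^sub>R axis i 1)) (d i)) \<and> sum d UNIV = 0"
      proof
        fix x
        show "\<exists>d. (\<forall>i. tw (\<lambda>t. h B (x + t *\<^sub>R axis i 1)) (d i)) \<and> sum d UNIV = 0"
          apply (rule exI[of _ "\<lambda>i. pdi i (pdi i (h B)) x"])
          using tw_pdi dh dph harm_h by simp
      qed
    qed
  qed
  have Z: "(\<Sum>k<4. cf B k * pdi i (pdi (of_nat k) (g (bl B k))) y) = 0" for i B y
  proof -
    obtain c0 where "c0 = h B 0" by simp
    then have "h B = (\<lambda>_. c0)" using hconst by (simp add: fun_eq_iff)
    then have "pdi i (h B) y = 0" by (simp add: pdi_const)
    then show ?thesis unfolding pdhf by simp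
  qed
  have lapg: "(\<Sum>i\<in>UNIV. pdi i (pdi i (g B)) y) = 0" for B y
  proof -
    define A where "A = Rep_blade B"
    have A3: "A \<subseteq> {1,2,3}" using Rep_blade[of B] by (simp add: A_def)
    define P where "P i k C = pdi (of_nat i) (pdi (of_nat k) (g C)) y" for i k :: nat and C
    define a where "a i k = eps i * cf B i * cf (bl B i) k * P i k (bl (bl B i) k)" for i k
    have bb: "bl (bl B i) k = Abs_blade (sbs k (sbs i A))" if "i < 4" for i k
    proof -
      have "bl (bl B i) k = Abs_blade (sbs k (Rep_blade (bl B i)))" by (rule bl_def)
      then show ?thesis using Rep_bl[OF that, of B] by (simp add: A_def)
    qed
    have cc: "cf (bl B i) k = cfs k (sbs i A)" if "i < 4" for i k
    proof -
      have "cf (bl B i) k = cfs k (Rep_blade (bl B i))" by (rule cf_def)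
      then show ?thesis using Rep_bl[OF that, of B] by (simp add: A_def)
    qed
    have cB: "cf B i = cfs i A" for i by (simp add: cf_def A_def)
    have anti: "a i k = - a k i" if ik: "i \<in> {..<4}" "k \<in> {..<4}" "i \<noteq> k" for i k
    proof -
      have i4: "i < 4" and k4': "k < 4" using ik by auto
      have S: "sbs k (sbs i A) = sbs i (sbs k A)"
        "eps i * cfs i A * cfs k (sbs i A) = - (eps k * cfs k A * cfs i (sbs k A))"
        using signs[OF A3 i4 k4'] ik(3) by auto
      have bl_eq: "bl (bl B i) k = bl (bl B k) i" using bb[OF i4, of k] bb[OF k4', of i] S(1) by simp
      have Psym: "P i k X = P k i X" for X unfolding P_def by (rule schwarz2[OF C])
      have "a i k = (eps i * cfs i A * cfs k (sbs i A)) * P i k (bl (bl B i) k)"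
        unfolding a_def cB cc[OF i4] by simp
      also have "\<dots> = - (eps k * cfs k A * cfs i (sbs k A)) * P k i (bl (bl B k) i)"
        using S(2) bl_eq Psym by simp
      also have "\<dots> = - a k i"
        unfolding a_def cB cc[OF k4'] by simp
      finally show ?thesis .
    qed
    have diag: "a i i = P i i B" if i4: "i < 4" for i
    proof -
      have S: "eps i * cfs i A * cfs i (sbs i A) = 1" "sbs i (sbs i A) = A"
        using signs[OF A3 i4 i4] by auto
      have "bl (bl B i) i = B" using bb[OF i4, of i] S(2) by (simp add: A_def Rep_blade_inverse)
      then show ?thesis unfolding a_def cB cc[OF i4] using S(1) by simp
    qed
    have zero_i: "(\<Sum>k<4. a i k) = 0" if i4: "i < 4" for i
    proof -
      have "(\<Sum>k<4. a i k) = eps i * cf B i * (\<Sum>k<4. cf (bl B i) k * pdi (of_nat i) (pdi (of_nat k) (g (bl (bl B i) k))) y)"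
        unfolding a_def P_def by (simp add: sum_distrib_left mult.assoc)
      also have "\<dots> = 0" using Z[of "bl B i" "of_nat i" y] by simp
      finally show ?thesis .
    qed
    have "(\<Sum>i<4. \<Sum>k<4. a i k) = (\<Sum>i<(4::nat). (0::real))" by (rule sum.cong) (simp_all add: zero_i)
    then have "0 = (\<Sum>i<4. \<Sum>k<4. a i k)" by simp
    also have "\<dots> = (\<Sum>i<4. a i i)" by (rule antisym_sum[OF finite_lessThan anti])
    also have "\<dots> = (\<Sum>i<4. P i i B)" by (rule sum.cong) (simp_all add: diag)
    also have "\<dots> = (\<Sum>i\<in>UNIV. pdi i (pdi i (g B)) y)"
      unfolding P_def using conv4[of "\<lambda>i. pdi i (pdi i (g B)) y"] by simp
    finally show ?thesis by simp
  qed
  have gconst: "g B x = g B 0" for B x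
  proof -
    obtain M where M: "\<forall>x. \<bar>g B x\<bar> \<le> M" using bnd0 by blast
    show ?thesis
    proof (rule liouville[of "g B" M])
      show "continuous_on UNIV (g B)" by (rule diff_cont) (rule C3_d0[OF C])
      show "\<forall>x. \<bar>g B x\<bar> \<le> M" by (rule M)
      show "\<forall>x. \<exists>d. (\<forall>i. tw (\<lambda>t. g B (x + t *\<^sub>R axis i 1)) (d i)) \<and> sum d UNIV = 0"
      proof
        fix x
        show "\<exists>d. (\<forall>i. tw (\<lambda>t. g B (x + t *\<^sub>R axis i 1)) (d i)) \<and> sum d UNIV = 0"
          apply (rule exI[of _ "\<lambda>i. pdi i (pdi i (g B)) x"])
          using tw_pdi C3_d0[OF C] C3_d1[OF C] lapg by simp
      qed
    qed
  qed
  show ?thesis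
    apply (rule exI[of _ "f 0"])
    using gconst unfolding g_def by (simp add: vec_eq_iff)
qed

end
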